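(* Let $q$ be a power of an odd prime $p$ and let $\ell$ be a linearized polynomial over $\mathbb F_{q^2}$. Suppose the function $x^{q+1}+\ell(x^2)$ is planar on $\mathbb F_{q^2}$. Then $\ell$ has at most $q$ roots in $\mathbb F_{q^2}$. Moreover, if $\ell(\mathbb F_{q^2})\cap\mathbb F_q=\{0\}$, then $\ell$ has exactly $q$ roots in $\mathbb F_{q^2}$.
   Context: A linearized polynomial over $\mathbb F_{q^2}$ is a polynomial of the form $\sum_i c_i x^{p^i}$ with $c_i\in\mathbb F_{q^2}$. A function $f$ on $\mathbb F_{q^n}$ is planar if for every $c\in\mathbb F_{q^n}^*$ the map $x\mapsto f(x+c)-f(x)$ is a permutation of $\mathbb F_{q^n}$. $\ell(\mathbb F_{q^2})$ denotes the image of the map induced by $\ell$ on $\mathbb F_{q^2}$. *)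

theory Defs
  imports "HOL-Computational_Algebra.Primes"
begin

definition planar :: "('a::field \<Rightarrow> 'a) \<Rightarrow> bool" where
  "planar f \<longleftrightarrow> (\<forall>c. c \<noteq> 0 \<longrightarrow> bij (\<lambda>x. f (x + c) - f x))"

definition linearized :: "nat \<Rightarrow> nat \<Rightarrow> (nat \<Rightarrow> 'a::field) \<Rightarrow> 'a \<Rightarrow> 'a" where
  "linearized p m c x = (\<Sum>i<m. c i * x ^ (p ^ i))"

end

theory Submission
  imports Defs "HOL-Number_Theory.Residues" "HOL-Computational_Algebra.Polynomial"
begin

lemma fin_field_pow_card:
  fixes x :: "'a :: {field,finite}"
  shows "x ^ card (UNIV :: 'a set) = x"
proof (cases "x = 0")
  case False
  have "x * (\<Prod>y\<in>UNIV-{0}. x * y) = x * x ^ (card (UNIV :: 'a set) - 1) * \<Prod>(UNIV-{0})"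
    by (simp add: prod.distrib mult_ac)
  also have "x * x ^ (card (UNIV :: 'a set) - 1) = x ^ Suc (card (UNIV :: 'a set) - 1)"
    by (subst power_Suc) auto
  also have "Suc (card (UNIV :: 'a set) - 1) = card (UNIV :: 'a set)"
    using finite_UNIV_card_ge_0[where ?'a = 'a] by simp
  also have "(\<Prod>y\<in>UNIV-{0}. x * y) = (\<Prod>y\<in>UNIV-{0}. y)"
    by (rule prod.reindex_bij_witness[of _ "\<lambda>y. y / x" "\<lambda>y. x * y"]) (use False in auto)
  finally show ?thesis
    by simp
qed (use finite_UNIV_card_ge_0[where ?'a = 'a] in auto)

lemma additive_minus:
  fixes g :: "'a::ab_group_add \<Rightarrow> 'b::ab_group_add"
  assumes "\<And>x y. g (x + y) = g x + g y"
  shows "g (x - y) = g x - g y"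
proof -
  have "g (x - y) + g y = g x" using assms[of "x - y" y] by simp
  then show ?thesis by (simp add: algebra_simps)
qed

lemma additive_card:
  fixes g :: "'a::{ab_group_add,finite} \<Rightarrow> 'a"
  assumes add: "\<And>x y. g (x + y) = g x + g y"
  shows "card (UNIV :: 'a set) = card (range g) * card {x. g x = 0}"
proof -
  have fib: "card (g -` {y}) = card {x. g x = 0}" if "y \<in> range g" for y
  proof -
    from that obtain x0 where x0: "g x0 = y" by blast
    have s1: "g -` {y} \<subseteq> (\<lambda>z. x0 + z) ` {x. g x = 0}"
    proof
      fix z assume "z \<in> g -` {y}"
      then have "g (z - x0) = 0" using additive_minus[OF add] x0 by simp
      then show "z \<in> (\<lambda>z. x0 + z) ` {x. g x = 0}" by (intro image_eqI[of _ _ "z - x0"]) auto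
    qed
    have s2: "(\<lambda>z. x0 + z) ` {x. g x = 0} \<subseteq> g -` {y}" using add x0 by auto
    have "g -` {y} = (\<lambda>z. x0 + z) ` {x. g x = 0}" using s1 s2 by (rule antisym)
    then show ?thesis by (simp add: card_image inj_on_def)
  qed
  have "UNIV = (\<Union>y\<in>range g. g -` {y})" by auto
  then have "card (UNIV :: 'a set) = card (\<Union>y\<in>range g. g -` {y})" by simp
  also have "\<dots> = (\<Sum>y\<in>range g. card (g -` {y}))"
    by (rule card_UN_disjoint) auto
  also have "\<dots> = (\<Sum>y\<in>range g. card {x. g x = 0})"
    using fib by (intro sum.cong) auto
  finally show ?thesis by simp
qed

lemma sum_inj_card:
  fixes A B :: "'a::{ab_group_add,finite} set"
  assumes "\<And>a a'. a \<in> A \<Longrightarrow> a' \<in> A \<Longrightarrow> a - a' \<in> A"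
    and "\<And>b b'. b \<in> B \<Longrightarrow> b' \<in> B \<Longrightarrow> b - b' \<in> B"
    and "A \<inter> B \<subseteq> {0}"
  shows "card A * card B \<le> card (UNIV :: 'a set)"
proof -
  have "inj_on (\<lambda>(a, b). a + b) (A \<times> B)"
  proof (rule inj_onI, clarsimp)
    fix a b a' b' assume h: "a \<in> A" "b \<in> B" "a' \<in> A" "b' \<in> B" "a + b = a' + b'"
    then have "a - a' = b' - b" by (simp add: algebra_simps)
    moreover have "a - a' \<in> A" "b' - b \<in> B" using h assms(1,2) by auto
    ultimately have "a - a' = 0" "b' - b = 0" using assms(3) by auto
    then show "a = a' \<and> b = b'" by simp
  qed
  then have "card (A \<times> B) \<le> card (UNIV :: 'a set)"
    by (rule card_inj_on_le) auto
  then show ?thesis by (simp add: card_cartesian_product)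
qed

lemma roots_le:
  fixes s :: "'a::field"
  assumes "s \<noteq> 0" "q \<ge> 2"
  shows "card {x. x ^ q + s * x = 0} \<le> q"
proof -
  define P where "P = monom (1::'a) q + [:0, s:]"
  have dg: "degree [:0, s:] < degree (monom (1::'a) q)" using assms by (simp add: degree_monom_eq)
  have "degree P = q" unfolding P_def using degree_add_eq_left[OF dg] by (simp add: degree_monom_eq)
  moreover have "P \<noteq> 0" using \<open>degree P = q\<close> assms by auto
  moreover have "{x. x ^ q + s * x = 0} = {x. poly P x = 0}"
    unfolding P_def by (simp add: poly_monom mult.commute)
  ultimately show ?thesis using card_poly_roots_bound[of P] by simp
qed

theorem proposition2p3:
  fixes p q k m :: nat and c :: "nat \<Rightarrow> 'a::{field,finite}"
  assumes "prime p" and "odd p" and "k \<ge> 1" and "q = p ^ k"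
    and "card (UNIV :: 'a set) = q ^ 2"
    and "planar (\<lambda>x. x ^ (q + 1) + linearized p m c (x ^ 2))"
  shows "card {x. linearized p m c x = 0} \<le> q
    \<and> (range (linearized p m c) \<inter> {y. y ^ q = y} = {0}
         \<longrightarrow> card {x. linearized p m c x = 0} = q)"
proof -
  let ?L = "linearized p m c"
  have fin: "finite (UNIV :: 'a set)" by simp
  have "p \<le> p ^ k" using assms(1,3) using prime_ge_1_nat[of p] by (intro self_le_power) auto
  then have q2: "q \<ge> 2" using assms(1,4) prime_ge_2_nat[of p] by linarith
  have cp: "CHAR('a) > 0" using finite_imp_CHAR_pos[OF fin] .
  have cprime: "prime CHAR('a)" using prime_CHAR_semidom[OF cp] .
  have "CHAR('a) dvd p ^ (k * 2)" using CHAR_dvd_CARD[where 'a='a] assms(4,5) by (simp add: power_mult)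
  then have "CHAR('a) dvd p" using cprime prime_dvd_power by blast
  then have char: "CHAR('a) = p" using cprime assms(1) primes_dvd_imp_eq by blast
  have fr: "(x + y) ^ (p ^ i) = x ^ (p ^ i) + y ^ (p ^ i)" for x y :: 'a and i
    using freshmans_dream'[where 'a='a, OF cprime, of "p ^ i" i] char by simp
  have frq: "(x + y) ^ q = x ^ q + y ^ q" for x y :: 'a using fr[of x y k] assms(4) by simp
  have Ladd: "?L (x + y) = ?L x + ?L y" for x y
    unfolding linearized_def by (simp add: fr distrib_left sum.distrib)
  have L0: "?L 0 = 0" using Ladd[of 0 0] by (metis add_left_cancel add.right_neutral)
  define Tr where "Tr = (\<lambda>v::'a. v ^ q + v)"
  have Tradd: "Tr (x + y) = Tr x + Tr y" for x y unfolding Tr_def by (simp add: frq algebra_simps)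
  have qq: "v ^ (q * q) = v" for v :: 'a using fin_field_pow_card[of v] assms(5) by (simp add: power2_eq_square)
  have Trq: "Tr v ^ q = Tr v" for v unfolding Tr_def by (simp add: frq qq flip: power_mult add.commute)
  have cTr: "card (range Tr) \<le> q"
  proof -
    have "range Tr \<subseteq> {x. x ^ q + (-1) * x = 0}" using Trq by auto
    then have "card (range Tr) \<le> card {x. x ^ q + (-1) * x = (0::'a)}" by (intro card_mono) simp_all
    also have "\<dots> \<le> q" using roots_le[of "-1::'a" q] q2 by simp
    finally show ?thesis .
  qed
  have cT: "card {v. Tr v = 0} \<le> q"
    using roots_le[of "1::'a" q] q2 unfolding Tr_def by simp
  have tot: "q * q = card (range Tr) * card {v. Tr v = 0}"
    using additive_card[OF Tradd] assms(5) by (simp add: power2_eq_square)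
  have cT2: "card {v. Tr v = 0} \<ge> q"
  proof (rule ccontr)
    assume "\<not> ?thesis"
    then have "card (range Tr) * card {v. Tr v = 0} < q * q"
    proof -
      have "card (range Tr) * card {v. Tr v = 0} \<le> q * card {v. Tr v = 0}" using cTr by (rule mult_le_mono1)
      also have "\<dots> < q * q" using \<open>\<not> q \<le> card {v. Tr v = 0}\<close> q2 by (intro mult_strict_left_mono) auto
      finally show ?thesis .
    qed
    then show False using tot by simp
  qed
  have cTr2: "card (range Tr) \<ge> q"
  proof (rule ccontr)
    assume "\<not> ?thesis"
    then have "card (range Tr) * card {v. Tr v = 0} < q * q"
    proof -
      have "card (range Tr) * card {v. Tr v = 0} \<le> card (range Tr) * q" using cT by (rule mult_le_mono2)
      also have "\<dots> < q * q" using \<open>\<not> q \<le> card (range Tr)\<close> q2 by (intro mult_strict_right_mono) auto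
      finally show ?thesis .
    qed
    then show False using tot by simp
  qed
  have two: "(2::'a) \<noteq> 0"
  proof
    assume "(2::'a) = 0"
    then have "of_nat 2 = (0::'a)" by simp
    then have "p dvd 2" using char of_nat_eq_0_iff_char_dvd by metis
    then have "p \<le> 2" by (simp add: dvd_imp_le)
    then show False using assms(1,2) prime_ge_2_nat[of p] by (cases "p = 2") auto
  qed
  have KT: "{x. ?L x = 0} \<inter> {v. Tr v = 0} \<subseteq> {0}"
  proof
    fix u assume u: "u \<in> {x. ?L x = 0} \<inter> {v. Tr v = 0}"
    show "u \<in> {0}"
    proof (rule ccontr)
      assume "u \<notin> {0}"
      then have un: "u \<noteq> 0" by simp
      define D where "D = (\<lambda>x::'a. ((x + 1) ^ (q + 1) + ?L ((x + 1) ^ 2)) - (x ^ (q + 1) + ?L (x ^ 2)))"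
      have "bij D" using assms(6)[unfolded planar_def, rule_format, of 1] unfolding D_def by simp
      then have inj: "inj D" by (rule bij_is_inj)
      define x where "x = u / 2"
      have xn: "x \<noteq> 0" using un two unfolding x_def by simp
      have u2: "2 * x = u" using two unfolding x_def by simp
      have t2: "(2::'a) ^ q = 2" using frq[of 1 1] by simp
      have xq: "x ^ q + x = 0"
      proof -
        have "x ^ q + x = (u ^ q + u) / 2" unfolding x_def using t2 by (simp add: power_divide add_divide_distrib)
        also have "\<dots> = 0" using u unfolding Tr_def by simp
        finally show ?thesis .
      qed
      have Lu: "?L u = 0" using u by simp
      have e1: "(x + 1) ^ (q + 1) = x ^ (q + 1) + (x ^ q + x) + 1"
        using frq[of x 1] by (simp add: algebra_simps)
      have sq: "(x + 1) ^ 2 = x ^ 2 + 2 * x + 1" by (simp add: power2_eq_square algebra_simps)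
      have e2: "?L ((x + 1) ^ 2) = ?L (x ^ 2) + ?L u + ?L 1"
        unfolding sq u2 Ladd by simp
      have "D x = 1 + ?L 1" unfolding D_def using e1 e2 xq Lu by simp
      moreover have "D 0 = 1 + ?L 1" unfolding D_def using L0 q2 by simp
      ultimately have "D x = D 0" by simp
      then have "x = 0" using inj by (simp add: inj_eq)
      then show False using xn by simp
    qed
  qed
  have subK: "a - a' \<in> {x. ?L x = 0}" if "a \<in> {x. ?L x = 0}" "a' \<in> {x. ?L x = 0}" for a a'
    using that additive_minus[of ?L, OF Ladd] by simp
  have subT: "a - a' \<in> {x. Tr x = 0}" if "a \<in> {x. Tr x = 0}" "a' \<in> {x. Tr x = 0}" for a a'
    using that additive_minus[of Tr, OF Tradd] by simp
  have "card {x. ?L x = 0} * card {v. Tr v = 0} \<le> q * q"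
    using sum_inj_card[OF subK subT KT] assms(5) by (simp add: power2_eq_square)
  moreover have "card {x. ?L x = 0} * q \<le> card {x. ?L x = 0} * card {v. Tr v = 0}"
    using cT2 by (rule mult_le_mono2)
  ultimately have "card {x. ?L x = 0} * q \<le> q * q" by linarith
  then have part1: "card {x. ?L x = 0} \<le> q" using q2 by simp
  have part2: "card {x. ?L x = 0} = q" if h: "range ?L \<inter> {y. y ^ q = y} = {0}"
  proof -
    have RT: "range ?L \<inter> range Tr \<subseteq> {0}" using h Trq by auto
    have subR: "a - a' \<in> range ?L" if "a \<in> range ?L" "a' \<in> range ?L" for a a'
    proof -
      from that obtain x y where "a = ?L x" "a' = ?L y" by auto
      then have "a - a' = ?L (x - y)" using additive_minus[of ?L, OF Ladd] by simp
      then show ?thesis by simp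
    qed
    have subTr: "a - a' \<in> range Tr" if "a \<in> range Tr" "a' \<in> range Tr" for a a'
    proof -
      from that obtain x y where "a = Tr x" "a' = Tr y" by auto
      then have "a - a' = Tr (x - y)" using additive_minus[of Tr, OF Tradd] by simp
      then show ?thesis by simp
    qed
    have "card (range ?L) * card (range Tr) \<le> q * q"
      using sum_inj_card[OF subR subTr RT] assms(5) by (simp add: power2_eq_square)
    moreover have "card (range ?L) * q \<le> card (range ?L) * card (range Tr)"
      using cTr2 by (rule mult_le_mono2)
    ultimately have "card (range ?L) * q \<le> q * q" by linarith
    then have cR: "card (range ?L) \<le> q" using q2 by simp
    have tot2: "q * q = card (range ?L) * card {x. ?L x = 0}"
      using additive_card[OF Ladd] assms(5) by (simp add: power2_eq_square)
    have "card {x. ?L x = 0} \<ge> q"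
    proof (rule ccontr)
      assume "\<not> ?thesis"
      then have "card (range ?L) * card {x. ?L x = 0} < q * q"
      proof -
        have "card (range ?L) * card {x. ?L x = 0} \<le> q * card {x. ?L x = 0}" using cR by (rule mult_le_mono1)
        also have "\<dots> < q * q" using \<open>\<not> q \<le> card {x. ?L x = 0}\<close> q2 by (intro mult_strict_left_mono) auto
        finally show ?thesis .
      qed
      then show False using tot2 by simp
    qed
    then show ?thesis using part1 by simp
  qed
  show ?thesis using part1 part2 by blast
qed

end
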